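(* Let $A\in M_n(\mathbb{C})$ with $\|A\|_2=\sigma$, let $r_i=\sum_{k=1}^nA_{ik}$ be its row sums and $c_j=\sum_{k=1}^nA_{kj}$ its column sums. Then: (1) $|r_1|=\cdots=|r_n|=\sigma$ if and only if $A=\sigma W_\theta D$, where $W_\theta=\operatorname{diag}(e^{i\theta_1},\dots,e^{i\theta_n})$ with $r_k=\sigma e^{i\theta_k}$ for each $k$, and $D$ is a $1$-generalized doubly stochastic matrix with $\|D\|_2=1$. (2) $|c_1|=\cdots=|c_n|=\sigma$ if and only if $A=\sigma DW_\gamma$, where $W_\gamma=\operatorname{diag}(e^{i\gamma_1},\dots,e^{i\gamma_n})$ with $c_k=\sigma e^{i\gamma_k}$ for each $k$, and $D$ is a $1$-generalized doubly stochastic matrix with $\|D\|_2=1$.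
   Context: $\|M\|_2$ denotes the spectral norm. A $1$-generalized doubly stochastic matrix is a square complex matrix all of whose row sums and column sums equal $1$. *)

theory Defs
  imports "HOL-Analysis.Analysis"
begin

definition spectral_norm :: "complex^'n^'n \<Rightarrow> real" where
  "spectral_norm A = onorm (\<lambda>x::complex^'n. A *v x)"

definition row_sum :: "complex^'n^'n \<Rightarrow> 'n \<Rightarrow> complex" where
  "row_sum A i = (\<Sum>k\<in>UNIV. A $ i $ k)"

definition col_sum :: "complex^'n^'n \<Rightarrow> 'n \<Rightarrow> complex" where
  "col_sum A j = (\<Sum>k\<in>UNIV. A $ k $ j)"

definition gen_doubly_stochastic :: "complex^'n^'n \<Rightarrow> bool" where
  "gen_doubly_stochastic D \<longleftrightarrow> (\<forall>i. row_sum D i = 1) \<and> (\<forall>j. col_sum D j = 1)"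

definition diag_cis :: "('n \<Rightarrow> real) \<Rightarrow> complex^'n^'n" where
  "diag_cis \<theta> = (\<chi> i j. if i = j then cis (\<theta> i) else 0)"

end

theory Submission
  imports Defs
begin

definition ones :: "complex^'n" where "ones = (\<chi> i. 1)"

lemma inner_ones: "inner x (ones::complex^'n) = Re (\<Sum>i\<in>UNIV. x $ i)"
  by (simp add: ones_def inner_vec_def Re_sum)

lemma norm_ones_sq: "(norm (ones::complex^'n))^2 = real CARD('n)"
  by (simp add: power2_norm_eq_inner ones_def inner_vec_def)

lemma dist_zero_ones:
  fixes r :: "complex^'n"
  assumes "norm r \<le> norm (ones::complex^'n)" "inner r ones = real CARD('n)"
  shows "r = ones"
proof -
  have "(norm (r - ones))^2 = (norm r)^2 - 2 * inner r ones + (norm (ones::complex^'n))^2"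
    by (simp add: power2_norm_eq_inner inner_diff_left inner_diff_right inner_commute)
  also have "\<dots> \<le> 0" using assms norm_ones_sq[where 'n='n]
    by (smt (verit) norm_ge_zero power_mono)
  finally show ?thesis by simp
qed

lemma col_to_row:
  fixes D :: "complex^'n^'n"
  assumes c: "\<And>x. norm (D *v x) \<le> norm x" and cs: "\<And>j. col_sum D j = 1"
  shows "row_sum D i = 1"
proof -
  have rs: "D *v ones = (\<chi> i. row_sum D i)"
    by (simp add: matrix_vector_mult_def ones_def row_sum_def vec_eq_iff)
  have "(\<Sum>i\<in>UNIV. row_sum D i) = (\<Sum>j\<in>UNIV. col_sum D j)"
    unfolding row_sum_def col_sum_def by (rule sum.swap)
  then have "inner (D *v ones) ones = real CARD('n)"
    by (simp add: rs inner_ones cs)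
  then have "D *v ones = ones" using dist_zero_ones c by blast
  then have "(D *v ones) $ i = 1" by (simp add: ones_def)
  then show ?thesis by (simp add: rs)
qed

lemma row_to_col:
  fixes D :: "complex^'n^'n"
  assumes c: "\<And>x. norm (D *v x) \<le> norm x" and rs: "\<And>i. row_sum D i = 1"
  shows "col_sum D j = 1"
proof -
  define y :: "complex^'n" where "y = (\<chi> j. cnj (col_sum D j))"
  have iy: "inner y ones = real CARD('n)"
  proof -
    have "(\<Sum>j\<in>UNIV. col_sum D j) = (\<Sum>i\<in>UNIV. row_sum D i)"
      unfolding row_sum_def col_sum_def by (rule sum.swap)
    then show ?thesis by (simp add: inner_ones y_def rs flip: cnj_sum)
  qed
  have "(\<Sum>i\<in>UNIV. (D *v y) $ i) = (\<Sum>j\<in>UNIV. col_sum D j * cnj (col_sum D j))"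
    unfolding matrix_vector_mult_def y_def col_sum_def
    by (simp add: sum_distrib_right) (rule sum.swap)
  then have "inner (D *v y) ones = Re (\<Sum>j\<in>UNIV. col_sum D j * cnj (col_sum D j))"
    by (simp only: inner_ones)
  also have "\<dots> = (\<Sum>j\<in>UNIV. (cmod (col_sum D j))^2)"
    unfolding Re_sum by (intro sum.cong refl) (simp add: cmod_power2 flip: power2_eq_square)
  also have "\<dots> = (norm y)^2"
    by (simp add: power2_norm_eq_inner inner_vec_def y_def inner_complex_def cmod_power2)
  finally have e: "(norm y)^2 = inner (D *v y) ones" by simp
  also have "\<dots> \<le> norm (D *v y) * norm (ones::complex^'n)" by (rule norm_cauchy_schwarz)
  also have "\<dots> \<le> norm y * norm (ones::complex^'n)" by (rule mult_right_mono[OF c norm_ge_zero])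
  finally have yy0: "(norm y)^2 \<le> norm y * norm (ones::complex^'n)" .
  then have yy: "norm y * norm y \<le> norm y * norm (ones::complex^'n)"
    by (simp only: power2_eq_square)
  have "norm y \<le> norm (ones::complex^'n)"
  proof (cases "norm y = 0")
    case True then show ?thesis by simp
  next
    case False then show ?thesis 
    proof -
      have "0 < norm y" using False by simp
      then show ?thesis by (rule mult_left_le_imp_le[OF yy])
    qed
  qed
  then have "y = ones" using dist_zero_ones iy by blast
  then have "cnj (col_sum D j) = 1" by (simp add: y_def ones_def vec_eq_iff)
  then show ?thesis by (metis complex_cnj_cnj complex_cnj_one)
qed


lemma norm_vec_eqI:
  fixes x y :: "complex^'n"
  assumes "\<And>i. cmod (x $ i) = cmod (y $ i)"
  shows "norm x = norm y"
  using assms by (simp add: norm_vec_def)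

lemma onorm_one:
  fixes D :: "complex^'n^'n"
  assumes c: "\<And>x. norm (D *v x) \<le> norm x" and rs: "\<And>i. row_sum D i = 1"
  shows "spectral_norm D = 1"
proof (rule antisym)
  show "spectral_norm D \<le> 1" unfolding spectral_norm_def
    by (rule onorm_le) (simp add: c)
  have "D *v ones = ones"
    by (simp add: matrix_vector_mult_def ones_def vec_eq_iff rs[unfolded row_sum_def])
  moreover have "norm (D *v ones) \<le> spectral_norm D * norm (ones::complex^'n)"
    unfolding spectral_norm_def by (rule onorm) simp
  moreover have "norm (ones::complex^'n) > 0"
    using norm_ones_sq[where 'n='n] by (metis norm_ge_zero order_le_less power_zero_numeral zero_less_card_finite of_nat_0_less_iff)
  ultimately show "1 \<le> spectral_norm D" by simp
qed

lemma sn_bound: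
  fixes A :: "complex^'n^'n"
  shows "norm (A *v x) \<le> spectral_norm A * norm x"
  unfolding spectral_norm_def by (rule onorm) simp

lemma sn_nonneg:
  fixes A :: "complex^'n^'n"
  shows "0 \<le> spectral_norm A"
  unfolding spectral_norm_def by (rule onorm_pos_le) simp

lemma sn_zero:
  fixes A :: "complex^'n^'n"
  assumes "spectral_norm A = 0"
  shows "A = 0"
proof -
  have "\<And>x. A *v x = 0 *v x" using sn_bound[of A] assms
    by (metis mult_zero_left norm_le_zero_iff matrix_vector_mult_0)
  then show ?thesis using matrix_eq by blast
qed

lemma id_ok: "gen_doubly_stochastic (mat 1 :: complex^'n^'n) \<and> spectral_norm (mat 1 :: complex^'n^'n) = 1"
proof
  show "gen_doubly_stochastic (mat 1 :: complex^'n^'n)"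
    by (simp add: gen_doubly_stochastic_def row_sum_def col_sum_def mat_def)
  have "(\<lambda>x. (mat 1 :: complex^'n^'n) *v x) = (\<lambda>x. x)" by (simp add: matrix_vector_mul_lid)
  then show "spectral_norm (mat 1 :: complex^'n^'n) = 1" by (simp add: spectral_norm_def onorm_id)
qed

lemma cis_cnj_mult [simp]: "cnj (cis t) * cis t = 1"
  by (simp add: cis_cnj cis_mult)


lemma sum_delta_l: "(\<Sum>k\<in>UNIV. (if i = k then c else 0) * f k) = (c::complex) * f (i::'n::finite)"
proof -
  have "(\<Sum>k\<in>UNIV. (if i = k then c else 0) * f k) = (\<Sum>k\<in>UNIV. if i = k then c * f k else 0)"
    by (intro sum.cong) auto
  then show ?thesis by simp
qed

lemma sum_delta_r: "(\<Sum>k\<in>UNIV. f k * (if k = j then c k else 0)) = f (j::'n::finite) * (c j::complex)"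
proof -
  have "(\<Sum>k\<in>UNIV. f k * (if k = j then c k else 0)) = (\<Sum>k\<in>UNIV. if k = j then f k * c k else 0)"
    by (intro sum.cong) auto
  then show ?thesis by simp
qed

lemma row_part:
  fixes A :: "complex^'n^'n" and \<sigma> :: real
  assumes sA: "spectral_norm A = \<sigma>"
  shows "(\<forall>k. cmod (row_sum A k) = \<sigma>) \<longleftrightarrow>
           (\<exists>\<theta> D. (\<forall>k. row_sum A k = complex_of_real \<sigma> * cis (\<theta> k)) \<and>
                  gen_doubly_stochastic D \<and> spectral_norm D = 1 \<and>
                  A = \<sigma> *\<^sub>R (diag_cis \<theta> ** D))"
proof
  have s0: "0 \<le> \<sigma>" using sn_nonneg[of A] sA by simp
  assume h: "\<forall>k. cmod (row_sum A k) = \<sigma>"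
  show "\<exists>\<theta> D. (\<forall>k. row_sum A k = complex_of_real \<sigma> * cis (\<theta> k)) \<and>
                  gen_doubly_stochastic D \<and> spectral_norm D = 1 \<and>
                  A = \<sigma> *\<^sub>R (diag_cis \<theta> ** D)"
  proof (cases "\<sigma> = 0")
    case True
    then have "A = 0" using sn_zero sA by blast
    then show ?thesis using True id_ok[where 'n='n] h by auto
  next
    case False
    then have sp: "\<sigma> > 0" using s0 by simp
    define \<theta> :: "'n \<Rightarrow> real" where "\<theta> k = Arg (row_sum A k)" for k
    have r: "row_sum A k = complex_of_real \<sigma> * cis (\<theta> k)" for k
      using rcis_cmod_Arg[of "row_sum A k"] h by (simp add: \<theta>_def rcis_def)
    define D :: "complex^'n^'n" where "D = (\<chi> i j. cnj (cis (\<theta> i)) * A $ i $ j / complex_of_real \<sigma>)"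
    have rs: "row_sum D i = 1" for i
    proof -
      have "row_sum D i = cnj (cis (\<theta> i)) * row_sum A i / complex_of_real \<sigma>"
        by (simp add: D_def row_sum_def sum_distrib_left sum_divide_distrib)
      also have "\<dots> = 1" using sp by (simp add: r)
      finally show ?thesis .
    qed
    have c: "norm (D *v x) \<le> norm x" for x
    proof -
      have "norm (D *v x) = norm ((1/\<sigma>) *\<^sub>R (A *v x))"
      proof (rule norm_vec_eqI)
        fix i
        have "(D *v x) $ i = cnj (cis (\<theta> i)) * ((A *v x) $ i) / complex_of_real \<sigma>"
          by (simp add: D_def matrix_vector_mult_def sum_distrib_left sum_divide_distrib mult.assoc)
        then show "cmod ((D *v x) $ i) = cmod (((1/\<sigma>) *\<^sub>R (A *v x)) $ i)"
          using sp by (simp add: norm_mult norm_divide)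
      qed
      also have "\<dots> = norm (A *v x) / \<sigma>" using sp by simp
      also have "\<dots> \<le> norm x" using sn_bound[of A x] sA sp by (simp add: divide_le_eq mult.commute)
      finally show ?thesis .
    qed
    have cs: "col_sum D j = 1" for j using row_to_col[of D] c rs by blast
    have eq: "A = \<sigma> *\<^sub>R (diag_cis \<theta> ** D)"
    proof -
      have "A $ i $ j = (\<sigma> *\<^sub>R (diag_cis \<theta> ** D)) $ i $ j" for i j
      proof -
        have "(diag_cis \<theta> ** D) $ i $ j = cis (\<theta> i) * D $ i $ j"
          by (simp add: diag_cis_def matrix_matrix_mult_def sum_delta_l)
        also have "\<dots> = A $ i $ j / complex_of_real \<sigma>"
          by (simp add: D_def mult.assoc[symmetric] mult.commute[of "cis _"])
        finally have "(\<sigma> *\<^sub>R (diag_cis \<theta> ** D)) $ i $ j = \<sigma> *\<^sub>R (A $ i $ j / complex_of_real \<sigma>)"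
          by simp
        then show ?thesis using sp by (simp add: scaleR_conv_of_real)
      qed
      then show ?thesis by (simp add: vec_eq_iff)
    qed
    show ?thesis
      apply (rule exI[of _ \<theta>], rule exI[of _ D])
      using r rs cs onorm_one[OF c rs] eq by (auto simp: gen_doubly_stochastic_def)
  qed
next
  have s0: "0 \<le> \<sigma>" using sn_nonneg[of A] sA by simp
  assume "\<exists>\<theta> D. (\<forall>k. row_sum A k = complex_of_real \<sigma> * cis (\<theta> k)) \<and>
                  gen_doubly_stochastic D \<and> spectral_norm D = 1 \<and>
                  A = \<sigma> *\<^sub>R (diag_cis \<theta> ** D)"
  then show "\<forall>k. cmod (row_sum A k) = \<sigma>" using s0 by (auto simp: norm_mult)
qed


lemma col_part:
  fixes A :: "complex^'n^'n" and \<sigma> :: real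
  assumes sA: "spectral_norm A = \<sigma>"
  shows "(\<forall>k. cmod (col_sum A k) = \<sigma>) \<longleftrightarrow>
           (\<exists>\<gamma> D. (\<forall>k. col_sum A k = complex_of_real \<sigma> * cis (\<gamma> k)) \<and>
                  gen_doubly_stochastic D \<and> spectral_norm D = 1 \<and>
                  A = \<sigma> *\<^sub>R (D ** diag_cis \<gamma>))"
proof
  have s0: "0 \<le> \<sigma>" using sn_nonneg[of A] sA by simp
  assume h: "\<forall>k. cmod (col_sum A k) = \<sigma>"
  show "\<exists>\<gamma> D. (\<forall>k. col_sum A k = complex_of_real \<sigma> * cis (\<gamma> k)) \<and>
                  gen_doubly_stochastic D \<and> spectral_norm D = 1 \<and>
                  A = \<sigma> *\<^sub>R (D ** diag_cis \<gamma>)"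
  proof (cases "\<sigma> = 0")
    case True
    then have "A = 0" using sn_zero sA by blast
    then show ?thesis using True id_ok[where 'n='n] h by auto
  next
    case False
    then have sp: "\<sigma> > 0" using s0 by simp
    define \<gamma> :: "'n \<Rightarrow> real" where "\<gamma> k = Arg (col_sum A k)" for k
    have r: "col_sum A k = complex_of_real \<sigma> * cis (\<gamma> k)" for k
      using rcis_cmod_Arg[of "col_sum A k"] h by (simp add: \<gamma>_def rcis_def)
    define D :: "complex^'n^'n" where "D = (\<chi> i j. A $ i $ j * cnj (cis (\<gamma> j)) / complex_of_real \<sigma>)"
    have cs: "col_sum D j = 1" for j
    proof -
      have "col_sum D j = col_sum A j * cnj (cis (\<gamma> j)) / complex_of_real \<sigma>"
        by (simp add: D_def col_sum_def sum_distrib_right sum_divide_distrib)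
      also have "\<dots> = 1" using sp by (simp add: r mult.commute[of "cis _"] mult.assoc)
      finally show ?thesis .
    qed
    have c: "norm (D *v x) \<le> norm x" for x
    proof -
      define z :: "complex^'n" where "z = (\<chi> j. cnj (cis (\<gamma> j)) * x $ j)"
      have nz: "norm z = norm x"
        by (rule norm_vec_eqI) (simp add: z_def norm_mult)
      have "norm (D *v x) = norm ((1/\<sigma>) *\<^sub>R (A *v z))"
      proof (rule norm_vec_eqI)
        fix i
        have "(D *v x) $ i = ((A *v z) $ i) / complex_of_real \<sigma>"
          by (simp add: D_def z_def matrix_vector_mult_def sum_divide_distrib mult.commute mult.left_commute)
        then show "cmod ((D *v x) $ i) = cmod (((1/\<sigma>) *\<^sub>R (A *v z)) $ i)"
          using sp by (simp add: norm_divide)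
      qed
      also have "\<dots> = norm (A *v z) / \<sigma>" using sp by simp
      finally have "norm (D *v x) = norm (A *v z) / \<sigma>" .
      also have "\<dots> \<le> norm x" using sn_bound[of A z] sA sp nz by (simp add: divide_le_eq mult.commute)
      finally show ?thesis .
    qed
    have rs: "row_sum D i = 1" for i using col_to_row[of D] c cs by blast
    have eq: "A = \<sigma> *\<^sub>R (D ** diag_cis \<gamma>)"
    proof -
      have "A $ i $ j = (\<sigma> *\<^sub>R (D ** diag_cis \<gamma>)) $ i $ j" for i j
      proof -
        have "(D ** diag_cis \<gamma>) $ i $ j = D $ i $ j * cis (\<gamma> j)"
          by (simp add: diag_cis_def matrix_matrix_mult_def sum_delta_r)
        also have "\<dots> = A $ i $ j / complex_of_real \<sigma>"
          by (simp add: D_def mult.assoc)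
        finally have "(\<sigma> *\<^sub>R (D ** diag_cis \<gamma>)) $ i $ j = \<sigma> *\<^sub>R (A $ i $ j / complex_of_real \<sigma>)"
          by simp
        then show ?thesis using sp by (simp add: scaleR_conv_of_real)
      qed
      then show ?thesis by (simp add: vec_eq_iff)
    qed
    show ?thesis
      apply (rule exI[of _ \<gamma>], rule exI[of _ D])
      using r rs cs onorm_one[OF c rs] eq by (auto simp: gen_doubly_stochastic_def)
  qed
next
  have s0: "0 \<le> \<sigma>" using sn_nonneg[of A] sA by simp
  assume "\<exists>\<gamma> D. (\<forall>k. col_sum A k = complex_of_real \<sigma> * cis (\<gamma> k)) \<and>
                  gen_doubly_stochastic D \<and> spectral_norm D = 1 \<and>
                  A = \<sigma> *\<^sub>R (D ** diag_cis \<gamma>)"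
  then show "\<forall>k. cmod (col_sum A k) = \<sigma>" using s0 by (auto simp: norm_mult)
qed

theorem proposition2p4:
  fixes A :: "complex^'n^'n" and \<sigma> :: real
  assumes "spectral_norm A = \<sigma>"
  shows "((\<forall>k. cmod (row_sum A k) = \<sigma>) \<longleftrightarrow>
           (\<exists>\<theta> D. (\<forall>k. row_sum A k = complex_of_real \<sigma> * cis (\<theta> k)) \<and>
                  gen_doubly_stochastic D \<and> spectral_norm D = 1 \<and>
                  A = \<sigma> *\<^sub>R (diag_cis \<theta> ** D)))
       \<and> ((\<forall>k. cmod (col_sum A k) = \<sigma>) \<longleftrightarrow>
           (\<exists>\<gamma> D. (\<forall>k. col_sum A k = complex_of_real \<sigma> * cis (\<gamma> k)) \<and>
                  gen_doubly_stochastic D \<and> spectral_norm D = 1 \<and>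
                  A = \<sigma> *\<^sub>R (D ** diag_cis \<gamma>)))"
  using row_part[OF assms] col_part[OF assms] by blast

end
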